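(* Let $X$ be a topological space, $x\in X$, and $\mathcal B\subseteq\wp(X)$. Then the games $G_1(\Omega_{X,x},\mathcal B)$ and $G_1(\mathscr N(x),\neg\mathcal B)$ are dual.
   Context: $\Omega_{X,x}=\{A\subseteq X:x\in\mathrm{cl}_X(A)\}$; $\mathscr N(x)$ is the set of open sets containing $x$. In $G_1(\mathcal E,\mathcal C)$, at each inning $n\in\omega$ One plays $E_n\in\mathcal E$ and Two picks $x_n\in E_n$; Two wins iff $\{x_n:n\in\omega\}\in\mathcal C$; $\neg\mathcal C$ is the complement of $\mathcal C$. A strategy for One maps finite sequences of Two's moves to moves; it is predetermined if it depends only on the inning number. A strategy for Two maps finite sequences $(E_0,\dots,E_n)$ of One's moves to an element of $E_n$; it is Markov if it depends only on $E_n$ and $n$. Games $G,H$ are dual if: One has a winning strategy in $G$ iff Two has one in $H$; One has a winning strategy in $H$ iff Two has one in $G$; One has a winning predetermined strategy in $G$ iff Two has a winning Markov strategy in $H$; and One has a winning predetermined strategy in $H$ iff Two has a winning Markov strategy in $G$. *)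

theory Defs
  imports "HOL-Analysis.Analysis"
begin

definition Omega_at :: "'a topology \<Rightarrow> 'a \<Rightarrow> 'a set set" where
  "Omega_at X x = {A. A \<subseteq> topspace X \<and> x \<in> X closure_of A}"

definition nbhds :: "'a topology \<Rightarrow> 'a \<Rightarrow> 'a set set" where
  "nbhds X x = {U. openin X U \<and> x \<in> U}"

definition one_strategy :: "'a set set \<Rightarrow> ('a list \<Rightarrow> 'a set) \<Rightarrow> bool" where
  "one_strategy E \<sigma> \<longleftrightarrow> (\<forall>s. \<sigma> s \<in> E)"

definition play_vs_one :: "('a list \<Rightarrow> 'a set) \<Rightarrow> (nat \<Rightarrow> 'a) \<Rightarrow> bool" where
  "play_vs_one \<sigma> f \<longleftrightarrow> (\<forall>n. f n \<in> \<sigma> (map f [0..<n]))"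

definition one_has_winning_strategy :: "'a set set \<Rightarrow> 'a set set \<Rightarrow> bool" where
  "one_has_winning_strategy E C \<longleftrightarrow>
     (\<exists>\<sigma>. one_strategy E \<sigma> \<and> (\<forall>f. play_vs_one \<sigma> f \<longrightarrow> range f \<notin> C))"

definition one_has_winning_predetermined_strategy :: "'a set set \<Rightarrow> 'a set set \<Rightarrow> bool" where
  "one_has_winning_predetermined_strategy E C \<longleftrightarrow>
     (\<exists>\<sigma>::nat \<Rightarrow> 'a set. (\<forall>n. \<sigma> n \<in> E) \<and> (\<forall>f. (\<forall>n. f n \<in> \<sigma> n) \<longrightarrow> range f \<notin> C))"

definition two_strategy :: "'a set set \<Rightarrow> ('a set list \<Rightarrow> 'a) \<Rightarrow> bool" where
  "two_strategy E \<tau> \<longleftrightarrow> (\<forall>s. s \<noteq> [] \<and> set s \<subseteq> E \<longrightarrow> \<tau> s \<in> last s)"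

definition two_has_winning_strategy :: "'a set set \<Rightarrow> 'a set set \<Rightarrow> bool" where
  "two_has_winning_strategy E C \<longleftrightarrow>
     (\<exists>\<tau>. two_strategy E \<tau> \<and>
        (\<forall>Es. (\<forall>n. Es n \<in> E) \<longrightarrow> range (\<lambda>n. \<tau> (map Es [0..<Suc n])) \<in> C))"

definition two_has_winning_markov_strategy :: "'a set set \<Rightarrow> 'a set set \<Rightarrow> bool" where
  "two_has_winning_markov_strategy E C \<longleftrightarrow>
     (\<exists>m::'a set \<Rightarrow> nat \<Rightarrow> 'a. (\<forall>A\<in>E. \<forall>n. m A n \<in> A) \<and>
        (\<forall>Es. (\<forall>n. Es n \<in> E) \<longrightarrow> range (\<lambda>n. m (Es n) n) \<in> C))"

definition dual_games :: "'a set set \<Rightarrow> 'a set set \<Rightarrow> 'a set set \<Rightarrow> 'a set set \<Rightarrow> bool" where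
  "dual_games E1 C1 E2 C2 \<longleftrightarrow>
     (one_has_winning_strategy E1 C1 \<longleftrightarrow> two_has_winning_strategy E2 C2) \<and>
     (one_has_winning_strategy E2 C2 \<longleftrightarrow> two_has_winning_strategy E1 C1) \<and>
     (one_has_winning_predetermined_strategy E1 C1 \<longleftrightarrow> two_has_winning_markov_strategy E2 C2) \<and>
     (one_has_winning_predetermined_strategy E2 C2 \<longleftrightarrow> two_has_winning_markov_strategy E1 C1)"

end

theory Submission
  imports Defs
begin

definition pick :: "'a set \<Rightarrow> 'a set \<Rightarrow> 'a" where
  "pick U A = (SOME y. y \<in> U \<inter> A)"

definition pts :: "('a list \<Rightarrow> 'a set) \<Rightarrow> 'a set list \<Rightarrow> 'a list" where
  "pts \<sigma> s = foldl (\<lambda>ps U. ps @ [pick U (\<sigma> ps)]) [] s"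

lemma pts_snoc: "pts \<sigma> (s @ [U]) = pts \<sigma> s @ [pick U (\<sigma> (pts \<sigma> s))]"
  by (simp add: pts_def)

lemma pts_map: fixes Es :: "nat \<Rightarrow> 'a set" shows "pts \<sigma> (map Es [0..<n]) = map (\<lambda>k. last (pts \<sigma> (map Es [0..<Suc k]))) [0..<n]"
proof (induction n)
  case 0
  then show ?case by (simp add: pts_def)
next
  case (Suc n)
  have "pts \<sigma> (map Es [0..<Suc n]) = pts \<sigma> (map Es [0..<n]) @ [pick (Es n) (\<sigma> (pts \<sigma> (map Es [0..<n])))]"
    by (simp add: pts_snoc)
  then show ?case using Suc by simp
qed

lemma one_to_two:
  fixes \<sigma> :: "'a list \<Rightarrow> 'a set" and E2 :: "'a set set"
  assumes s1: "\<forall>s. \<sigma> s \<in> E1"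
    and meet: "\<forall>A\<in>E1. \<forall>U\<in>E2. A \<inter> U \<noteq> {}"
  shows "\<exists>\<tau>. two_strategy E2 \<tau> \<and> (\<forall>Es::nat\<Rightarrow>'a set. (\<forall>n. Es n \<in> E2) \<longrightarrow>
            play_vs_one \<sigma> (\<lambda>n. \<tau> (map Es [0..<Suc n])))"
proof (intro exI conjI allI impI)
  let ?\<tau> = "\<lambda>s. last (pts \<sigma> s)"
  have pk: "pick U (\<sigma> ps) \<in> U \<inter> \<sigma> ps" if "U \<in> E2" for U ps
  proof -
    have "U \<inter> \<sigma> ps \<noteq> {}" using meet s1 that by blast
    then show ?thesis unfolding pick_def by (metis ex_in_conv someI_ex)
  qed
  show "two_strategy E2 ?\<tau>"
    unfolding two_strategy_def
  proof (intro allI impI)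
    fix s :: "'a set list" assume "s \<noteq> [] \<and> set s \<subseteq> E2"
    then obtain s' U where s: "s = s' @ [U]" and "U \<in> E2"
      by (metis in_set_conv_decomp rev_exhaust subsetD last_in_set last_snoc)
    then show "?\<tau> s \<in> last s" using pk by (simp add: pts_snoc)
  qed
  fix Es :: "nat \<Rightarrow> 'a set" assume E: "\<forall>n. Es n \<in> E2"
  show "play_vs_one \<sigma> (\<lambda>n. ?\<tau> (map Es [0..<Suc n]))"
    unfolding play_vs_one_def
  proof
    fix n
    have "?\<tau> (map Es [0..<Suc n]) = pick (Es n) (\<sigma> (pts \<sigma> (map Es [0..<n])))"
      by (simp add: pts_snoc)
    also have "\<dots> \<in> \<sigma> (pts \<sigma> (map Es [0..<n]))" using pk E by blast
    finally show "?\<tau> (map Es [0..<Suc n]) \<in> \<sigma> (map (\<lambda>n. ?\<tau> (map Es [0..<Suc n])) [0..<n])"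
      using pts_map[of \<sigma> Es n] by simp
  qed
qed

lemma one_to_two_in:
  assumes "two_strategy E2 \<tau>" "\<forall>n. Es n \<in> E2"
  shows "\<tau> (map Es [0..<Suc n]) \<in> Es n"
proof -
  have "map Es [0..<Suc n] \<noteq> [] \<and> set (map Es [0..<Suc n]) \<subseteq> E2" using assms(2) by auto
  then have "\<tau> (map Es [0..<Suc n]) \<in> last (map Es [0..<Suc n])"
    using assms(1) unfolding two_strategy_def by blast
  then show ?thesis by simp
qed

definition hst :: "('a set list \<Rightarrow> 'a) \<Rightarrow> 'a set set \<Rightarrow> 'a set \<Rightarrow> 'a list \<Rightarrow> 'a set list" where
  "hst \<tau> E d ps = foldl (\<lambda>h p. h @ [if \<exists>A\<in>E. \<tau> (h @ [A]) = p then SOME A. A \<in> E \<and> \<tau> (h @ [A]) = p else d]) [] ps"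

lemma hst_snoc: "hst \<tau> E d (ps @ [p]) = hst \<tau> E d ps @
   [if \<exists>A\<in>E. \<tau> (hst \<tau> E d ps @ [A]) = p then SOME A. A \<in> E \<and> \<tau> (hst \<tau> E d ps @ [A]) = p else d]"
  by (simp add: hst_def)

lemma hst_in: "d \<in> E \<Longrightarrow> set (hst \<tau> E d ps) \<subseteq> E"
proof (induction ps rule: rev_induct)
  case Nil
  then show ?case by (simp add: hst_def)
next
  case (snoc p ps)
  show ?case
  proof (cases "\<exists>A\<in>E. \<tau> (hst \<tau> E d ps @ [A]) = p")
    case True
    then have "(SOME A. A \<in> E \<and> \<tau> (hst \<tau> E d ps @ [A]) = p) \<in> E"
      by (metis (mono_tags, lifting) someI_ex)
    then show ?thesis using snoc True by (simp add: hst_snoc)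
  next
    case False
    then show ?thesis using snoc by (simp add: hst_snoc)
  qed
qed

lemma two_to_one:
  fixes \<tau> :: "'a set list \<Rightarrow> 'a" and E2 :: "'a set set" and E1 :: "'a set set"
  assumes win: "\<forall>Es::nat\<Rightarrow>'a set. (\<forall>n. Es n \<in> E2) \<longrightarrow> range (\<lambda>n. \<tau> (map Es [0..<Suc n])) \<in> C"
    and d: "d \<in> E2"
    and K: "\<forall>h. set h \<subseteq> E2 \<longrightarrow> (\<exists>S\<in>E1. \<forall>p\<in>S. \<exists>A\<in>E2. \<tau> (h @ [A]) = p)"
  shows "\<exists>\<sigma>. one_strategy E1 \<sigma> \<and> (\<forall>f. play_vs_one \<sigma> f \<longrightarrow> range f \<in> C)"
proof -
  define \<sigma> where "\<sigma> ps = (SOME S. S \<in> E1 \<and> (\<forall>p\<in>S. \<exists>A\<in>E2. \<tau> (hst \<tau> E2 d ps @ [A]) = p))" for ps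
  have sg: "\<sigma> ps \<in> E1 \<and> (\<forall>p\<in>\<sigma> ps. \<exists>A\<in>E2. \<tau> (hst \<tau> E2 d ps @ [A]) = p)" for ps
  proof -
    have "\<exists>S. S \<in> E1 \<and> (\<forall>p\<in>S. \<exists>A\<in>E2. \<tau> (hst \<tau> E2 d ps @ [A]) = p)"
      using K hst_in[OF d] by blast
    then show ?thesis unfolding \<sigma>_def by (rule someI_ex)
  qed
  show ?thesis
  proof (intro exI conjI allI impI)
    show "one_strategy E1 \<sigma>" using sg by (simp add: one_strategy_def)
    fix f assume pf: "play_vs_one \<sigma> f"
    define Es where "Es n = last (hst \<tau> E2 d (map f [0..<Suc n]))" for n
    have ex: "\<exists>A\<in>E2. \<tau> (hst \<tau> E2 d (map f [0..<n]) @ [A]) = f n" for n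
      using sg pf unfolding play_vs_one_def by blast
    have Esn: "Es n \<in> E2 \<and> \<tau> (hst \<tau> E2 d (map f [0..<n]) @ [Es n]) = f n" for n
    proof -
      have "Es n = (SOME A. A \<in> E2 \<and> \<tau> (hst \<tau> E2 d (map f [0..<n]) @ [A]) = f n)"
        using ex[of n] by (simp add: Es_def hst_snoc)
      then show ?thesis using ex[of n] by (metis (mono_tags, lifting) someI_ex)
    qed
    have hm: "hst \<tau> E2 d (map f [0..<n]) = map Es [0..<n]" for n
    proof (induction n)
      case 0
      then show ?case by (simp add: hst_def)
    next
      case (Suc n)
      have "hst \<tau> E2 d (map f [0..<Suc n]) = hst \<tau> E2 d (map f [0..<n]) @ [Es n]"
        using ex[of n] by (simp add: Es_def hst_snoc)
      then show ?case using Suc by simp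
    qed
    have "(\<lambda>n. \<tau> (map Es [0..<Suc n])) = f"
    proof
      fix n show "\<tau> (map Es [0..<Suc n]) = f n" using Esn[of n] hm[of n] by simp
    qed
    then show "range f \<in> C" using win Esn by metis
  qed
qed

lemma omega_meet: "A \<in> Omega_at X x \<Longrightarrow> U \<in> nbhds X x \<Longrightarrow> A \<inter> U \<noteq> {}"
proof -
  assume A: "A \<in> Omega_at X x" and U: "U \<in> nbhds X x"
  have "x \<in> U \<and> openin X U" using U by (simp add: nbhds_def)
  moreover have "\<forall>T. x \<in> T \<and> openin X T \<longrightarrow> (\<exists>y. y \<in> A \<and> y \<in> T)"
    using A unfolding Omega_at_def in_closure_of by simp
  ultimately show ?thesis by blast
qed

lemma nbhd_top: "x \<in> topspace X \<Longrightarrow> topspace X \<in> nbhds X x"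
  unfolding nbhds_def by simp

lemma nbhd_sub: "U \<in> nbhds X x \<Longrightarrow> U \<subseteq> topspace X"
  unfolding nbhds_def by (simp add: openin_subset)

lemma omega_sub: "A \<in> Omega_at X x \<Longrightarrow> A \<subseteq> topspace X"
  unfolding Omega_at_def by simp

lemma omega_of_nbhds:
  assumes "x \<in> topspace X" "\<forall>U\<in>nbhds X x. g U \<in> U"
  shows "g ` nbhds X x \<in> Omega_at X x"
proof -
  have sub: "g ` nbhds X x \<subseteq> topspace X"
  proof
    fix p assume "p \<in> g ` nbhds X x"
    then obtain U where U: "U \<in> nbhds X x" "p = g U" by (rule imageE) simp
    then have "p \<in> U" using assms(2) by simp
    then show "p \<in> topspace X" using nbhd_sub[OF U(1)] by (rule subsetD[rotated])
  qed
  have T: "\<forall>T. x \<in> T \<and> openin X T \<longrightarrow> (\<exists>y. y \<in> g ` nbhds X x \<and> y \<in> T)"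
  proof (intro allI impI)
    fix T assume "x \<in> T \<and> openin X T"
    then have T: "T \<in> nbhds X x" by (simp add: nbhds_def)
    then have "g T \<in> g ` nbhds X x" by (rule imageI)
    moreover have "g T \<in> T" using assms(2) T by simp
    ultimately show "\<exists>y. y \<in> g ` nbhds X x \<and> y \<in> T" by (intro exI conjI)
  qed
  have "x \<in> X closure_of (g ` nbhds X x)" unfolding in_closure_of using assms(1) T by (rule conjI)
  then show ?thesis using sub unfolding Omega_at_def by simp
qed

lemma nbhd_of_omega:
  assumes "x \<in> topspace X" and gA: "\<forall>A\<in>Omega_at X x. g A \<in> A"
  shows "\<exists>U\<in>nbhds X x. \<forall>p\<in>U. \<exists>A\<in>Omega_at X x. g A = p"
proof (rule ccontr)
  define S where "S = g ` Omega_at X x"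
  assume na: "\<not> (\<exists>U\<in>nbhds X x. \<forall>p\<in>U. \<exists>A\<in>Omega_at X x. g A = p)"
  have H: "\<exists>p\<in>U. p \<notin> S" if "U \<in> nbhds X x" for U
  proof (rule ccontr)
    assume "\<not> (\<exists>p\<in>U. p \<notin> S)"
    then have "\<forall>p\<in>U. \<exists>A\<in>Omega_at X x. g A = p" unfolding S_def by auto
    then show False using na that by blast
  qed
  have T: "\<forall>T. x \<in> T \<and> openin X T \<longrightarrow> (\<exists>y. y \<in> topspace X - S \<and> y \<in> T)"
  proof (intro allI impI)
    fix T assume T: "x \<in> T \<and> openin X T"
    then have "T \<in> nbhds X x" by (simp add: nbhds_def)
    then obtain p where p: "p \<in> T" "p \<notin> S" using H by blast
    have "T \<subseteq> topspace X" using T by (simp add: openin_subset)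
    then have "p \<in> topspace X" using p(1) by (rule subsetD)
    then have "p \<in> topspace X - S" using p(2) by simp
    then show "\<exists>y. y \<in> topspace X - S \<and> y \<in> T" using p(1) by (intro exI conjI)
  qed
  have "x \<in> X closure_of (topspace X - S)" unfolding in_closure_of using assms(1) T by (rule conjI)
  then have A: "topspace X - S \<in> Omega_at X x" unfolding Omega_at_def by simp
  then have "g (topspace X - S) \<in> S" unfolding S_def by (rule imageI)
  moreover have "g (topspace X - S) \<in> topspace X - S" using gA A by (rule bspec)
  ultimately show False by simp
qed

lemma pick_in: "A \<inter> U \<noteq> {} \<Longrightarrow> pick A U \<in> A \<inter> U"
  unfolding pick_def by (metis ex_in_conv someI_ex)

lemma p1a:
  assumes "x \<in> topspace X" "one_has_winning_strategy (Omega_at X x) (B)"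
  shows "two_has_winning_strategy (nbhds X x) (Pow (topspace X) - B)"
proof -
  obtain \<sigma> where s: "one_strategy (Omega_at X x) \<sigma>" "\<forall>f. play_vs_one \<sigma> f \<longrightarrow> range f \<notin> B"
    using assms(2) unfolding one_has_winning_strategy_def by blast
  have s1: "\<forall>s. \<sigma> s \<in> Omega_at X x" using s(1) unfolding one_strategy_def by simp
  have meet: "\<forall>A\<in>Omega_at X x. \<forall>U\<in>nbhds X x. A \<inter> U \<noteq> {}"
  proof (intro ballI)
    fix A U assume "A \<in> Omega_at X x" "U \<in> nbhds X x"
    then show "A \<inter> U \<noteq> {}" using omega_meet by (metis inf_commute)
  qed
  obtain \<tau> where t: "two_strategy (nbhds X x) \<tau>"
    "\<forall>Es::nat\<Rightarrow>'a set. (\<forall>n. Es n \<in> nbhds X x) \<longrightarrow> play_vs_one \<sigma> (\<lambda>n. \<tau> (map Es [0..<Suc n]))"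
    using one_to_two[OF s1 meet] by blast
  show ?thesis unfolding two_has_winning_strategy_def
  proof (intro exI conjI allI impI)
    show "two_strategy (nbhds X x) \<tau>" by fact
    fix Es :: "nat \<Rightarrow> 'a set" assume E: "\<forall>n. Es n \<in> nbhds X x"
    have "\<forall>n. \<tau> (map Es [0..<Suc n]) \<in> topspace X"
    proof
      fix n
      have "Es n \<in> nbhds X x" using E by simp
      then have "Es n \<subseteq> topspace X" by (rule nbhd_sub)
      then show "\<tau> (map Es [0..<Suc n]) \<in> topspace X"
        using one_to_two_in[OF t(1) E, of n] by (rule subsetD)
    qed
    then have r: "range (\<lambda>n. \<tau> (map Es [0..<Suc n])) \<subseteq> topspace X" by (simp add: image_subset_iff)
    have "play_vs_one \<sigma> (\<lambda>n. \<tau> (map Es [0..<Suc n]))" using t(2) E by simp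
    then have "range (\<lambda>n. \<tau> (map Es [0..<Suc n])) \<notin> B" using s(2) by simp
    then show "range (\<lambda>n. \<tau> (map Es [0..<Suc n])) \<in> Pow (topspace X) - B" using r  by simp
  qed
qed

lemma p2a:
  assumes "x \<in> topspace X" "one_has_winning_strategy (nbhds X x) (Pow (topspace X) - B)"
  shows "two_has_winning_strategy (Omega_at X x) (B)"
proof -
  obtain \<sigma> where s: "one_strategy (nbhds X x) \<sigma>" "\<forall>f. play_vs_one \<sigma> f \<longrightarrow> range f \<notin> Pow (topspace X) - B"
    using assms(2) unfolding one_has_winning_strategy_def by blast
  have s1: "\<forall>s. \<sigma> s \<in> nbhds X x" using s(1) unfolding one_strategy_def by simp
  have meet: "\<forall>A\<in>nbhds X x. \<forall>U\<in>Omega_at X x. A \<inter> U \<noteq> {}"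
  proof (intro ballI)
    fix A U assume "A \<in> nbhds X x" "U \<in> Omega_at X x"
    then show "A \<inter> U \<noteq> {}" using omega_meet by (metis inf_commute)
  qed
  obtain \<tau> where t: "two_strategy (Omega_at X x) \<tau>"
    "\<forall>Es::nat\<Rightarrow>'a set. (\<forall>n. Es n \<in> Omega_at X x) \<longrightarrow> play_vs_one \<sigma> (\<lambda>n. \<tau> (map Es [0..<Suc n]))"
    using one_to_two[OF s1 meet] by blast
  show ?thesis unfolding two_has_winning_strategy_def
  proof (intro exI conjI allI impI)
    show "two_strategy (Omega_at X x) \<tau>" by fact
    fix Es :: "nat \<Rightarrow> 'a set" assume E: "\<forall>n. Es n \<in> Omega_at X x"
    have "\<forall>n. \<tau> (map Es [0..<Suc n]) \<in> topspace X"
    proof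
      fix n
      have "Es n \<in> Omega_at X x" using E by simp
      then have "Es n \<subseteq> topspace X" by (rule omega_sub)
      then show "\<tau> (map Es [0..<Suc n]) \<in> topspace X"
        using one_to_two_in[OF t(1) E, of n] by (rule subsetD)
    qed
    then have r: "range (\<lambda>n. \<tau> (map Es [0..<Suc n])) \<subseteq> topspace X" by (simp add: image_subset_iff)
    have "play_vs_one \<sigma> (\<lambda>n. \<tau> (map Es [0..<Suc n]))" using t(2) E by simp
    then have "range (\<lambda>n. \<tau> (map Es [0..<Suc n])) \<notin> Pow (topspace X) - B" using s(2) by simp
    then show "range (\<lambda>n. \<tau> (map Es [0..<Suc n])) \<in> B" using r  by simp
  qed
qed

lemma p1b:
  assumes "x \<in> topspace X" "two_has_winning_strategy (nbhds X x) (Pow (topspace X) - B)"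
  shows "one_has_winning_strategy (Omega_at X x) B"
proof -
  obtain \<tau> where t: "two_strategy (nbhds X x) \<tau>"
    "\<forall>Es::nat\<Rightarrow>'a set. (\<forall>n. Es n \<in> nbhds X x) \<longrightarrow> range (\<lambda>n. \<tau> (map Es [0..<Suc n])) \<in> Pow (topspace X) - B"
    using assms unfolding two_has_winning_strategy_def by blast
  have K: "\<forall>h. set h \<subseteq> nbhds X x \<longrightarrow> (\<exists>S\<in>Omega_at X x. \<forall>p\<in>S. \<exists>A\<in>nbhds X x. \<tau> (h @ [A]) = p)"
  proof (intro allI impI)
    fix h assume h: "set h \<subseteq> nbhds X x"
    have "\<forall>U\<in>nbhds X x. \<tau> (h @ [U]) \<in> U"
    proof
      fix U assume "U \<in> nbhds X x"
      then have "h @ [U] \<noteq> [] \<and> set (h @ [U]) \<subseteq> nbhds X x" using h by auto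
      then have "\<tau> (h @ [U]) \<in> last (h @ [U])" using t(1) unfolding two_strategy_def by blast
      then show "\<tau> (h @ [U]) \<in> U" by simp
    qed
    then have "(\<lambda>U. \<tau> (h @ [U])) ` nbhds X x \<in> Omega_at X x"
      by (rule omega_of_nbhds[OF assms(1)])
    moreover have "\<forall>p\<in>(\<lambda>U. \<tau> (h @ [U])) ` nbhds X x. \<exists>A\<in>nbhds X x. \<tau> (h @ [A]) = p" by blast
    ultimately show "\<exists>S\<in>Omega_at X x. \<forall>p\<in>S. \<exists>A\<in>nbhds X x. \<tau> (h @ [A]) = p" by (rule bexI[rotated])
  qed
  obtain \<sigma> where sg: "one_strategy (Omega_at X x) \<sigma>" "\<forall>f. play_vs_one \<sigma> f \<longrightarrow> range f \<in> Pow (topspace X) - B"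
    using two_to_one[OF t(2) nbhd_top[OF assms(1)] K] by blast
  show ?thesis unfolding one_has_winning_strategy_def
  proof (intro exI conjI allI impI)
    show "one_strategy (Omega_at X x) \<sigma>" by fact
    fix f assume "play_vs_one \<sigma> f"
    then have "range f \<in> Pow (topspace X) - B" using sg(2) by simp
    then show "range f \<notin> B" by simp
  qed
qed

lemma p2b:
  assumes "x \<in> topspace X" "two_has_winning_strategy (Omega_at X x) B"
  shows "one_has_winning_strategy (nbhds X x) (Pow (topspace X) - B)"
proof -
  obtain \<tau> where t: "two_strategy (Omega_at X x) \<tau>"
    "\<forall>Es::nat\<Rightarrow>'a set. (\<forall>n. Es n \<in> Omega_at X x) \<longrightarrow> range (\<lambda>n. \<tau> (map Es [0..<Suc n])) \<in> B"
    using assms unfolding two_has_winning_strategy_def by blast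
  have K: "\<forall>h. set h \<subseteq> Omega_at X x \<longrightarrow> (\<exists>S\<in>nbhds X x. \<forall>p\<in>S. \<exists>A\<in>Omega_at X x. \<tau> (h @ [A]) = p)"
  proof (intro allI impI)
    fix h assume h: "set h \<subseteq> Omega_at X x"
    have "\<forall>A\<in>Omega_at X x. \<tau> (h @ [A]) \<in> A"
    proof
      fix U assume "U \<in> Omega_at X x"
      then have "h @ [U] \<noteq> [] \<and> set (h @ [U]) \<subseteq> Omega_at X x" using h by auto
      then have "\<tau> (h @ [U]) \<in> last (h @ [U])" using t(1) unfolding two_strategy_def by blast
      then show "\<tau> (h @ [U]) \<in> U" by simp
    qed
    from nbhd_of_omega[OF assms(1) this]
    show "\<exists>S\<in>nbhds X x. \<forall>p\<in>S. \<exists>A\<in>Omega_at X x. \<tau> (h @ [A]) = p" .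
  qed
  have d: "topspace X \<in> Omega_at X x"
    using assms(1) unfolding Omega_at_def by (simp add: closure_of_topspace)
  obtain \<sigma> where sg: "one_strategy (nbhds X x) \<sigma>" "\<forall>f. play_vs_one \<sigma> f \<longrightarrow> range f \<in> B"
    using two_to_one[OF t(2) d K] by blast
  show ?thesis unfolding one_has_winning_strategy_def
  proof (intro exI conjI allI impI)
    show "one_strategy (nbhds X x) \<sigma>" by fact
    fix f assume "play_vs_one \<sigma> f"
    then have "range f \<in> B" using sg(2) by simp
    then show "range f \<notin> Pow (topspace X) - B" by simp
  qed
qed

lemma p3a:
  assumes "x \<in> topspace X" "one_has_winning_predetermined_strategy (Omega_at X x) (B)"
  shows "two_has_winning_markov_strategy (nbhds X x) (Pow (topspace X) - B)"
proof -
  have "\<exists>\<sigma>::nat \<Rightarrow> 'a set. (\<forall>n. \<sigma> n \<in> Omega_at X x) \<and> (\<forall>f. (\<forall>n. f n \<in> \<sigma> n) \<longrightarrow> range f \<notin> B)"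
    using assms(2) by (simp only: one_has_winning_predetermined_strategy_def)
  then obtain \<sigma> :: "nat \<Rightarrow> 'a set" where sc: "(\<forall>n. \<sigma> n \<in> Omega_at X x) \<and> (\<forall>f. (\<forall>n. f n \<in> \<sigma> n) \<longrightarrow> range f \<notin> B)"
    by (rule exE)
  have s: "\<forall>n. \<sigma> n \<in> Omega_at X x" "\<forall>f. (\<forall>n. f n \<in> \<sigma> n) \<longrightarrow> range f \<notin> B"
    using sc by (rule conjunct1, rule conjunct2)
  have pk: "pick U (\<sigma> n) \<in> U \<inter> \<sigma> n" if "U \<in> nbhds X x" for U n
  proof -
    have sn: "\<sigma> n \<in> Omega_at X x" using s(1) by simp
    have "U \<inter> \<sigma> n \<noteq> {}" using omega_meet[OF sn that] by (simp add: Int_commute)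
    then show ?thesis by (rule pick_in)
  qed
  show ?thesis unfolding two_has_winning_markov_strategy_def
  proof (intro exI conjI ballI allI impI)
    show "pick A (\<sigma> n) \<in> A" if "A \<in> nbhds X x" for A n using pk[OF that, of n] by simp
    fix Es :: "nat \<Rightarrow> 'a set" assume E: "\<forall>n. Es n \<in> nbhds X x"
    have P: "\<forall>n. pick (Es n) (\<sigma> n) \<in> Es n \<inter> \<sigma> n"
    proof
      fix n have "Es n \<in> nbhds X x" using E by simp
      then show "pick (Es n) (\<sigma> n) \<in> Es n \<inter> \<sigma> n" by (rule pk)
    qed
    have "\<forall>n. pick (Es n) (\<sigma> n) \<in> topspace X"
    proof
      fix n have "Es n \<in> nbhds X x" using E by simp
      then have "Es n \<subseteq> topspace X" by (rule nbhd_sub)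
      moreover have "pick (Es n) (\<sigma> n) \<in> Es n" using P by simp
      ultimately show "pick (Es n) (\<sigma> n) \<in> topspace X" by (rule subsetD)
    qed
    then have r: "range (\<lambda>n. pick (Es n) (\<sigma> n)) \<subseteq> topspace X" by (simp add: image_subset_iff)
    have "\<forall>n. pick (Es n) (\<sigma> n) \<in> \<sigma> n" using P by simp
    then have "range (\<lambda>n. pick (Es n) (\<sigma> n)) \<notin> B" using s(2) by simp
    then show "range (\<lambda>n. pick (Es n) (\<sigma> n)) \<in> Pow (topspace X) - B" using r by simp
  qed
qed

lemma p4a:
  assumes "x \<in> topspace X" "one_has_winning_predetermined_strategy (nbhds X x) (Pow (topspace X) - B)"
  shows "two_has_winning_markov_strategy (Omega_at X x) (B)"
proof -
  have "\<exists>\<sigma>::nat \<Rightarrow> 'a set. (\<forall>n. \<sigma> n \<in> nbhds X x) \<and> (\<forall>f. (\<forall>n. f n \<in> \<sigma> n) \<longrightarrow> range f \<notin> Pow (topspace X) - B)"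
    using assms(2) by (simp only: one_has_winning_predetermined_strategy_def)
  then obtain \<sigma> :: "nat \<Rightarrow> 'a set" where sc: "(\<forall>n. \<sigma> n \<in> nbhds X x) \<and> (\<forall>f. (\<forall>n. f n \<in> \<sigma> n) \<longrightarrow> range f \<notin> Pow (topspace X) - B)"
    by (rule exE)
  have s: "\<forall>n. \<sigma> n \<in> nbhds X x" "\<forall>f. (\<forall>n. f n \<in> \<sigma> n) \<longrightarrow> range f \<notin> Pow (topspace X) - B"
    using sc by (rule conjunct1, rule conjunct2)
  have pk: "pick U (\<sigma> n) \<in> U \<inter> \<sigma> n" if "U \<in> Omega_at X x" for U n
  proof -
    have "\<sigma> n \<in> nbhds X x" using s(1) by simp
    then have "U \<inter> \<sigma> n \<noteq> {}" by (rule omega_meet[OF that])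
    then show ?thesis by (rule pick_in)
  qed
  show ?thesis unfolding two_has_winning_markov_strategy_def
  proof (intro exI conjI ballI allI impI)
    show "pick A (\<sigma> n) \<in> A" if "A \<in> Omega_at X x" for A n using pk[OF that, of n] by simp
    fix Es :: "nat \<Rightarrow> 'a set" assume E: "\<forall>n. Es n \<in> Omega_at X x"
    have P: "\<forall>n. pick (Es n) (\<sigma> n) \<in> Es n \<inter> \<sigma> n"
    proof
      fix n have "Es n \<in> Omega_at X x" using E by simp
      then show "pick (Es n) (\<sigma> n) \<in> Es n \<inter> \<sigma> n" by (rule pk)
    qed
    have "\<forall>n. pick (Es n) (\<sigma> n) \<in> topspace X"
    proof
      fix n have "Es n \<in> Omega_at X x" using E by simp
      then have "Es n \<subseteq> topspace X" by (rule omega_sub)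
      moreover have "pick (Es n) (\<sigma> n) \<in> Es n" using P by simp
      ultimately show "pick (Es n) (\<sigma> n) \<in> topspace X" by (rule subsetD)
    qed
    then have r: "range (\<lambda>n. pick (Es n) (\<sigma> n)) \<subseteq> topspace X" by (simp add: image_subset_iff)
    have "\<forall>n. pick (Es n) (\<sigma> n) \<in> \<sigma> n" using P by simp
    then have "range (\<lambda>n. pick (Es n) (\<sigma> n)) \<notin> Pow (topspace X) - B" using s(2) by simp
    then show "range (\<lambda>n. pick (Es n) (\<sigma> n)) \<in> B" using r by simp
  qed
qed

lemma p3b:
  assumes "x \<in> topspace X" "two_has_winning_markov_strategy (nbhds X x) (Pow (topspace X) - B)"
  shows "one_has_winning_predetermined_strategy (Omega_at X x) B"
proof -
  have "\<exists>m::'a set \<Rightarrow> nat \<Rightarrow> 'a. (\<forall>A\<in>nbhds X x. \<forall>n. m A n \<in> A) \<and>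
        (\<forall>Es. (\<forall>n. Es n \<in> nbhds X x) \<longrightarrow> range (\<lambda>n. m (Es n) n) \<in> Pow (topspace X) - B)"
    using assms(2) by (simp only: two_has_winning_markov_strategy_def)
  then obtain m :: "'a set \<Rightarrow> nat \<Rightarrow> 'a" where mc: "(\<forall>A\<in>nbhds X x. \<forall>n. m A n \<in> A) \<and>
        (\<forall>Es. (\<forall>n. Es n \<in> nbhds X x) \<longrightarrow> range (\<lambda>n. m (Es n) n) \<in> Pow (topspace X) - B)"
    by (rule exE)
  have m: "\<forall>A\<in>nbhds X x. \<forall>n. m A n \<in> A"
    "\<forall>Es. (\<forall>n. Es n \<in> nbhds X x) \<longrightarrow> range (\<lambda>n. m (Es n) n) \<in> Pow (topspace X) - B"
    using mc by (rule conjunct1, rule conjunct2)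
  show ?thesis unfolding one_has_winning_predetermined_strategy_def
  proof (intro exI conjI allI impI)
    show "(\<lambda>U. m U n) ` nbhds X x \<in> Omega_at X x" for n
    proof (rule omega_of_nbhds[OF assms(1)])
      show "\<forall>U\<in>nbhds X x. m U n \<in> U" using m(1) by simp
    qed
    fix f assume f: "\<forall>n. f n \<in> (\<lambda>U. m U n) ` nbhds X x"
    define Es where "Es n = (SOME U. U \<in> nbhds X x \<and> m U n = f n)" for n
    have E: "Es n \<in> nbhds X x \<and> m (Es n) n = f n" for n
    proof -
      have "f n \<in> (\<lambda>U. m U n) ` nbhds X x" using f by simp
      then obtain U where "U \<in> nbhds X x" "f n = m U n" by (rule imageE)
      then have "\<exists>U. U \<in> nbhds X x \<and> m U n = f n" by auto
      then show ?thesis unfolding Es_def by (rule someI_ex)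
    qed
    have eq: "(\<lambda>n. m (Es n) n) = f" using E by auto
    have "\<forall>n. Es n \<in> nbhds X x" using E by simp
    then have "range (\<lambda>n. m (Es n) n) \<in> Pow (topspace X) - B" using m(2) by simp
    then have "range f \<in> Pow (topspace X) - B" by (simp only: eq)
    then show "range f \<notin> B" by simp
  qed
qed

lemma p4b:
  assumes "x \<in> topspace X" "two_has_winning_markov_strategy (Omega_at X x) B"
  shows "one_has_winning_predetermined_strategy (nbhds X x) (Pow (topspace X) - B)"
proof -
  have "\<exists>m::'a set \<Rightarrow> nat \<Rightarrow> 'a. (\<forall>A\<in>Omega_at X x. \<forall>n. m A n \<in> A) \<and>
        (\<forall>Es. (\<forall>n. Es n \<in> Omega_at X x) \<longrightarrow> range (\<lambda>n. m (Es n) n) \<in> B)"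
    using assms(2) by (simp only: two_has_winning_markov_strategy_def)
  then obtain m :: "'a set \<Rightarrow> nat \<Rightarrow> 'a" where mc: "(\<forall>A\<in>Omega_at X x. \<forall>n. m A n \<in> A) \<and>
        (\<forall>Es. (\<forall>n. Es n \<in> Omega_at X x) \<longrightarrow> range (\<lambda>n. m (Es n) n) \<in> B)"
    by (rule exE)
  have m: "\<forall>A\<in>Omega_at X x. \<forall>n. m A n \<in> A"
    "\<forall>Es. (\<forall>n. Es n \<in> Omega_at X x) \<longrightarrow> range (\<lambda>n. m (Es n) n) \<in> B"
    using mc by (rule conjunct1, rule conjunct2)
  define \<sigma> where "\<sigma> n = (SOME U. U \<in> nbhds X x \<and> (\<forall>p\<in>U. \<exists>A\<in>Omega_at X x. m A n = p))" for n
  have sg: "\<sigma> n \<in> nbhds X x \<and> (\<forall>p\<in>\<sigma> n. \<exists>A\<in>Omega_at X x. m A n = p)" for n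
  proof -
    have "\<exists>U. U \<in> nbhds X x \<and> (\<forall>p\<in>U. \<exists>A\<in>Omega_at X x. m A n = p)"
    proof -
      have "\<forall>A\<in>Omega_at X x. m A n \<in> A" using m(1) by simp
      from nbhd_of_omega[OF assms(1) this] show ?thesis by blast
    qed
    then show ?thesis unfolding \<sigma>_def by (rule someI_ex)
  qed
  show ?thesis unfolding one_has_winning_predetermined_strategy_def
  proof (intro exI conjI allI impI)
    show "\<sigma> n \<in> nbhds X x" for n using sg[of n] by (rule conjunct1)
    fix f assume f: "\<forall>n. f n \<in> \<sigma> n"
    define Es where "Es n = (SOME A. A \<in> Omega_at X x \<and> m A n = f n)" for n
    have E: "Es n \<in> Omega_at X x \<and> m (Es n) n = f n" for n
    proof -
      have "f n \<in> \<sigma> n" using f by simp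
      then have "\<exists>A\<in>Omega_at X x. m A n = f n" using sg[of n] by simp
      then have "\<exists>A. A \<in> Omega_at X x \<and> m A n = f n" by blast
      then show ?thesis unfolding Es_def by (rule someI_ex)
    qed
    have eq: "(\<lambda>n. m (Es n) n) = f" using E by auto
    have "\<forall>n. Es n \<in> Omega_at X x" using E by simp
    then have "range (\<lambda>n. m (Es n) n) \<in> B" using m(2) by simp
    then have "range f \<in> B" by (simp only: eq)
    then show "range f \<notin> Pow (topspace X) - B" by simp
  qed
qed

theorem mainTheorem4:
  fixes X :: "'a topology" and x :: 'a and B :: "'a set set"
  assumes "x \<in> topspace X" and "B \<subseteq> Pow (topspace X)"
  shows "dual_games (Omega_at X x) B (nbhds X x) (Pow (topspace X) - B)"
  unfolding dual_games_def
proof (intro conjI iffI)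
  show "two_has_winning_strategy (nbhds X x) (Pow (topspace X) - B)" if "one_has_winning_strategy (Omega_at X x) B"
    by (rule p1a[OF assms(1) that])
  show "one_has_winning_strategy (Omega_at X x) B" if "two_has_winning_strategy (nbhds X x) (Pow (topspace X) - B)"
    by (rule p1b[OF assms(1) that])
  show "two_has_winning_strategy (Omega_at X x) B" if "one_has_winning_strategy (nbhds X x) (Pow (topspace X) - B)"
    by (rule p2a[OF assms(1) that])
  show "one_has_winning_strategy (nbhds X x) (Pow (topspace X) - B)" if "two_has_winning_strategy (Omega_at X x) B"
    by (rule p2b[OF assms(1) that])
  show "two_has_winning_markov_strategy (nbhds X x) (Pow (topspace X) - B)" if "one_has_winning_predetermined_strategy (Omega_at X x) B"
    by (rule p3a[OF assms(1) that])
  show "one_has_winning_predetermined_strategy (Omega_at X x) B" if "two_has_winning_markov_strategy (nbhds X x) (Pow (topspace X) - B)"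
    by (rule p3b[OF assms(1) that])
  show "two_has_winning_markov_strategy (Omega_at X x) B" if "one_has_winning_predetermined_strategy (nbhds X x) (Pow (topspace X) - B)"
    by (rule p4a[OF assms(1) that])
  show "one_has_winning_predetermined_strategy (nbhds X x) (Pow (topspace X) - B)" if "two_has_winning_markov_strategy (Omega_at X x) B"
    by (rule p4b[OF assms(1) that])
qed

end
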